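(* Let $\mathcal{T}=(\mathbb{K}_i,\phi_i)_{i=0,\dots,m}$ be a tower with $\mathbb{K}_0=\emptyset$ whose maps are elementary inclusions or elementary contractions, named according to the naming convention below, and let $\hat{\mathbb{K}}_0,\dots,\hat{\mathbb{K}}_m$ be the active small coning construction. For every $i\in\{0,\dots,m\}$, the set of vertices of $\mathbb{K}_i$ equals the set of active vertices of $\hat{\mathbb{K}}_i$.
   Context: Elementary inclusion: $\mathbb{K}_{i+1}=\mathbb{K}_i\cup\{\sigma\}$, $\sigma\notin\mathbb{K}_i$, $\phi_i$ the inclusion. Elementary contraction of distinct vertices $u,v$ of $\mathbb{K}_i$: for one of them, say $v$, the vertex set of $\mathbb{K}_{i+1}$ is that of $\mathbb{K}_i$ minus $v$, $\phi_i(u)=\phi_i(v)=u$, and $\phi_i$ is the identity on other vertices. Active small coning construction: $\hat{\mathbb{K}}_0=\emptyset$; vertices flagged active/inactive, a simplex is active iff all its vertices are; $\mathrm{Act}\overline{\mathrm{St}}(w,\hat{\mathbb{K}}_i)$ = active simplices of $\hat{\mathbb{K}}_i$ in the closed star of $w$. Inclusion of $\sigma$: $\hat{\mathbb{K}}_{i+1}=\hat{\mathbb{K}}_i\cup\{\sigma\}$, a new vertex marked active. Contraction of $u,v$: if $|\mathrm{Act}\overline{\mathrm{St}}(u,\hat{\mathbb{K}}_i)|\le|\mathrm{Act}\overline{\mathrm{St}}(v,\hat{\mathbb{K}}_i)|$, $\hat{\mathbb{K}}_{i+1}=\hat{\mathbb{K}}_i\cup\{\{v\}\cup\tau:\tau\in\mathrm{Act}\overline{\mathrm{St}}(u,\hat{\mathbb{K}}_i)\}$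 and $u$ is marked inactive; otherwise the same with $u$ and $v$ exchanged. Naming convention: each contraction maps $u$ and $v$ to the vertex not marked inactive in that step. *)

theory Defs
  imports Main
begin

definition simplicial_complex :: "'v set set \<Rightarrow> bool" where
  "simplicial_complex K \<longleftrightarrow>
     (\<forall>\<sigma>\<in>K. finite \<sigma> \<and> \<sigma> \<noteq> {} \<and> (\<forall>\<tau>. \<tau> \<subseteq> \<sigma> \<and> \<tau> \<noteq> {} \<longrightarrow> \<tau> \<in> K))"

definition vertices :: "'v set set \<Rightarrow> 'v set" where
  "vertices K = {w. {w} \<in> K}"

text \<open>Active vertices of a complex H whose vertex flags are given by the set A
  of vertices flagged active.\<close>
definition active_vertices :: "'v set set \<Rightarrow> 'v set \<Rightarrow> 'v set" where
  "active_vertices H A = {w. {w} \<in> H \<and> w \<in> A}"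

definition closed_star :: "'v \<Rightarrow> 'v set set \<Rightarrow> 'v set set" where
  "closed_star w H = {\<tau>\<in>H. \<exists>\<sigma>\<in>H. w \<in> \<sigma> \<and> \<tau> \<subseteq> \<sigma>}"

text \<open>Active simplices of the closed star (a simplex is active iff all its vertices are).\<close>
definition act_star :: "'v \<Rightarrow> 'v set set \<Rightarrow> 'v set \<Rightarrow> 'v set set" where
  "act_star w H A = {\<tau>\<in>closed_star w H. \<tau> \<subseteq> A}"

text \<open>Elementary inclusion of \<sigma>, together with the corresponding step of the active
  small coning construction (H, A) \<mapsto> (H', A').\<close>
definition incl_step ::
  "'v set set \<Rightarrow> 'v set set \<Rightarrow> 'v set \<Rightarrow> 'v set \<Rightarrow> ('v \<Rightarrow> 'v)
   \<Rightarrow> 'v set set \<Rightarrow> 'v set set \<Rightarrow> 'v set \<Rightarrow> bool" where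
  "incl_step K H A \<sigma> \<phi> K' H' A' \<longleftrightarrow>
     \<sigma> \<notin> K \<and> simplicial_complex (insert \<sigma> K) \<and>
     \<phi> = id \<and> K' = insert \<sigma> K \<and>
     H' = insert \<sigma> H \<and>
     A' = (if card \<sigma> = 1 then A \<union> \<sigma> else A)"

text \<open>Elementary contraction of u, v, with the naming convention: both are mapped to
  the vertex which is not marked inactive in the coning step.\<close>
definition contr_step ::
  "'v set set \<Rightarrow> 'v set set \<Rightarrow> 'v set \<Rightarrow> 'v \<Rightarrow> 'v \<Rightarrow> ('v \<Rightarrow> 'v)
   \<Rightarrow> 'v set set \<Rightarrow> 'v set set \<Rightarrow> 'v set \<Rightarrow> bool" where
  "contr_step K H A u v \<phi> K' H' A' \<longleftrightarrow>
     u \<noteq> v \<and> u \<in> vertices K \<and> v \<in> vertices K \<and>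
     (if card (act_star u H A) \<le> card (act_star v H A) then
        H' = H \<union> {insert v \<tau> | \<tau>. \<tau> \<in> act_star u H A} \<and> A' = A - {u} \<and>
        \<phi> = (\<lambda>x. if x = u then v else x)
      else
        H' = H \<union> {insert u \<tau> | \<tau>. \<tau> \<in> act_star v H A} \<and> A' = A - {v} \<and>
        \<phi> = (\<lambda>x. if x = v then u else x)) \<and>
     K' = image \<phi> ` K"

definition elem_step ::
  "'v set set \<Rightarrow> 'v set set \<Rightarrow> 'v set \<Rightarrow> ('v \<Rightarrow> 'v)
   \<Rightarrow> 'v set set \<Rightarrow> 'v set set \<Rightarrow> 'v set \<Rightarrow> bool" where
  "elem_step K H A \<phi> K' H' A' \<longleftrightarrow>
     (\<exists>\<sigma>. incl_step K H A \<sigma> \<phi> K' H' A') \<or>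
     (\<exists>u v. contr_step K H A u v \<phi> K' H' A')"

end

theory Submission
  imports Defs
begin

definition goodK :: "'v set set \<Rightarrow> bool" where
  "goodK K \<longleftrightarrow> (\<forall>\<sigma>\<in>K. \<sigma> \<noteq> {} \<and> (\<forall>x\<in>\<sigma>. {x} \<in> K))"

lemma incl_ok:
  assumes "incl_step K H A \<sigma> \<phi> K' H' A'" "goodK K" "vertices K = active_vertices H A"
  shows "goodK K' \<and> vertices K' = active_vertices H' A'"
proof -
  have sc: "simplicial_complex (insert \<sigma> K)" and K': "K' = insert \<sigma> K" and H': "H' = insert \<sigma> H"
    and A': "A' = (if card \<sigma> = 1 then A \<union> \<sigma> else A)"
    using assms(1) unfolding incl_step_def by auto
  have fin: "finite \<sigma>" and ne: "\<sigma> \<noteq> {}" and faces: "\<forall>x\<in>\<sigma>. {x} \<in> insert \<sigma> K"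
    using sc unfolding simplicial_complex_def by auto
  have g: "goodK K'" using assms(2) faces ne unfolding goodK_def K' by auto
  have eq: "\<And>w. w \<in> vertices K \<longleftrightarrow> {w} \<in> H \<and> w \<in> A"
    using assms(3) unfolding vertices_def active_vertices_def by auto
  show ?thesis
  proof (cases "card \<sigma> = 1")
    case True
    then obtain x where sx: "\<sigma> = {x}" using card_1_singletonE by blast
    show ?thesis using g eq unfolding vertices_def active_vertices_def K' H' A' sx
      by (auto simp: vertices_def)
  next
    case False
    then have "\<And>w. \<sigma> \<noteq> {w}" by auto
    then show ?thesis using g eq False unfolding vertices_def active_vertices_def K' H' A'
      by (auto simp: vertices_def)
  qed
qed

lemma contr_ok:
  assumes "a \<noteq> b" "a \<in> vertices K" "b \<in> vertices K"
    "H' = H \<union> {insert b \<tau> | \<tau>. \<tau> \<in> S}" "A' = A - {a}"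
    "\<phi> = (\<lambda>x. if x = a then b else x)" "K' = image \<phi> ` K"
    "goodK K" "vertices K = active_vertices H A"
  shows "goodK K' \<and> vertices K' = active_vertices H' A'"
proof -
  have eq: "\<And>w. w \<in> vertices K \<longleftrightarrow> {w} \<in> H \<and> w \<in> A"
    using assms(9) unfolding vertices_def active_vertices_def by auto
  have g: "goodK K'"
    unfolding goodK_def
  proof
    fix \<rho> assume "\<rho> \<in> K'"
    then obtain \<sigma> where s: "\<sigma> \<in> K" "\<rho> = \<phi> ` \<sigma>" using assms(7) by auto
    have "\<sigma> \<noteq> {}" "\<forall>x\<in>\<sigma>. {x} \<in> K" using s(1) assms(8) unfolding goodK_def by auto
    moreover have "\<And>x. {x} \<in> K \<Longrightarrow> {\<phi> x} \<in> K'"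
      using assms(7) by (metis image_empty image_eqI image_insert)
    ultimately show "\<rho> \<noteq> {} \<and> (\<forall>x\<in>\<rho>. {x} \<in> K')" using s by auto
  qed
  have vK': "vertices K' = vertices K - {a}"
  proof
    show "vertices K' \<subseteq> vertices K - {a}"
    proof
      fix w assume "w \<in> vertices K'"
      then have "{w} \<in> K'" unfolding vertices_def by auto
      then obtain \<sigma> where s: "\<sigma> \<in> K" "{w} = \<phi> ` \<sigma>" using assms(7) by auto
      then obtain x where x: "x \<in> \<sigma>" "\<phi> x = w" by (metis imageE insertI1)
      have "{x} \<in> K" using s(1) x(1) assms(8) unfolding goodK_def by auto
      then have "x \<in> vertices K" unfolding vertices_def by auto
      then show "w \<in> vertices K - {a}" using x(2) assms(1,3,6) by (auto split: if_splits)
    qed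
  next
    show "vertices K - {a} \<subseteq> vertices K'"
    proof
      fix w assume w: "w \<in> vertices K - {a}"
      then have "{w} \<in> K" unfolding vertices_def by auto
      moreover have "\<phi> ` {w} = {w}" using w assms(6) by auto
      ultimately have "{w} \<in> K'" using assms(7) by (metis image_eqI)
      then show "w \<in> vertices K'" unfolding vertices_def by auto
    qed
  qed
  have "active_vertices H' A' = vertices K - {a}"
  proof -
    have "\<And>w. {w} \<in> H' \<longleftrightarrow> {w} \<in> H \<or> (w = b \<and> (\<exists>\<tau>\<in>S. insert b \<tau> = {w}))"
      using assms(4) by auto
    then show ?thesis using eq assms(3,5) unfolding active_vertices_def by auto
  qed
  then show ?thesis using g vK' by simp
qed

lemma step_ok:
  assumes "elem_step K H A \<phi> K' H' A'" "goodK K" "vertices K = active_vertices H A"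
  shows "goodK K' \<and> vertices K' = active_vertices H' A'"
  using assms unfolding elem_step_def
proof (elim disjE exE)
  fix \<sigma> assume "incl_step K H A \<sigma> \<phi> K' H' A'"
  then show ?thesis using incl_ok assms by blast
next
  fix u v assume c: "contr_step K H A u v \<phi> K' H' A'"
  show ?thesis
  proof (cases "card (act_star u H A) \<le> card (act_star v H A)")
    case True
    then show ?thesis using c assms(2,3) unfolding contr_step_def
      by (intro contr_ok[where a=u and b=v and S="act_star u H A"]) auto
  next
    case False
    then show ?thesis using c assms(2,3) unfolding contr_step_def
      by (intro contr_ok[where a=v and b=u and S="act_star v H A"]) auto
  qed
qed

theorem lemma3:
  fixes K H :: "nat \<Rightarrow> 'v set set" and A :: "nat \<Rightarrow> 'v set"
    and \<phi> :: "nat \<Rightarrow> 'v \<Rightarrow> 'v" and m :: nat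
  assumes "K 0 = {}" and "H 0 = {}" and "A 0 = {}"
    and "\<forall>i<m. elem_step (K i) (H i) (A i) (\<phi> i) (K (Suc i)) (H (Suc i)) (A (Suc i))"
  shows "\<forall>i\<le>m. vertices (K i) = active_vertices (H i) (A i)"
proof -
  have "i \<le> m \<Longrightarrow> goodK (K i) \<and> vertices (K i) = active_vertices (H i) (A i)" for i
  proof (induction i)
    case 0
    then show ?case using assms(1-3) by (simp add: goodK_def vertices_def active_vertices_def)
  next
    case (Suc i)
    then have "i < m" "goodK (K i)" "vertices (K i) = active_vertices (H i) (A i)" by auto
    then show ?case using step_ok assms(4) by blast
  qed
  then show ?thesis by blast
qed

end
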